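(* Let $\mathcal{C}$ be a non-attacking $q$-configuration. Then there exists $N$ such that for all $n \ge N$ we have $\mathcal{C} \subset \mathcal{B}_n$ and $$\mathrm{cover}_n(\mathcal{C}) = (4n-3)q - \mathrm{inloss}_n(\mathcal{C}) - \mathrm{cenloss}_n(\mathcal{C}).$$
   Context: For $n \in \mathbb{N}$ let $I_n = \{\lfloor (2-n)/2 \rfloor, \ldots, \lfloor n/2 \rfloor\}$ and $\mathcal{B}_n = I_n \times I_n$. A configuration is a finite set $\mathcal{C} \subset \mathbb{Z}\times\mathbb{Z}$; a $q$-configuration has $|\mathcal{C}|=q$. For $Q=(x,y)$, $A(Q) = \{(x+i,y),(x,y+i),(x+i,y+i),(x+i,y-i) : i \in \mathbb{Z}\setminus\{0\}\}$, $A(\mathcal{C}) = \bigcup_{Q\in\mathcal{C}} A(Q)$, and $\mathrm{cover}_n(\mathcal{C}) = |(\mathcal{C}\cup A(\mathcal{C}))\cap \mathcal{B}_n|$. $\mathcal{C}$ is non-attacking if $Q'\notin A(Q)$ for all distinct $Q,Q'\in\mathcal{C}$. The attacking number is $a_{\mathcal{C}}(s) = \#\{Q \in \mathcal{C} : s \in A(Q)\}$ and the internal loss is $\mathrm{inloss}_n(\mathcal{C}) = \sum_{s \in A(\mathcal{C})\cap\mathcal{B}_n} (a_{\mathcal{C}}(s) - 1)$. The centralized loss of a Queen $Q=(x,y)$ on $\mathcal{B}_n$ is $\mathrm{cenloss}_n(Q) = 2\max\{|x|,|y|\}$ if $n$ is odd, and $\mathrm{cenloss}_n(Q) = 1 +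 2\min_{c}\max\{|x-c_1|,|y-c_2|\}$ if $n$ is even, the minimum over the four central squares $c=(c_1,c_2)\in\{(0,0),(1,0),(0,1),(1,1)\}$; and $\mathrm{cenloss}_n(\mathcal{C}) = \sum_{Q\in\mathcal{C}}\mathrm{cenloss}_n(Q)$. *)

theory Defs
  imports Main
begin

type_synonym square = "int \<times> int"

definition I :: "nat \<Rightarrow> int set" where
  "I n = {(2 - int n) div 2 .. int n div 2}"
(* integer div rounds toward -infinity, so (2-n) div 2 = floor((2-n)/2) *)

definition B :: "nat \<Rightarrow> square set" where
  "B n = I n \<times> I n"

definition attacks :: "square \<Rightarrow> square set" where
  "attacks Q = (case Q of (x, y) \<Rightarrow>
     {(x + i, y) | i. i \<noteq> 0} \<union> {(x, y + i) | i. i \<noteq> 0} \<union>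
     {(x + i, y + i) | i. i \<noteq> 0} \<union> {(x + i, y - i) | i. i \<noteq> 0})"

definition attacksC :: "square set \<Rightarrow> square set" where
  "attacksC C = (\<Union>Q\<in>C. attacks Q)"

definition cover :: "nat \<Rightarrow> square set \<Rightarrow> nat" where
  "cover n C = card ((C \<union> attacksC C) \<inter> B n)"

definition non_attacking :: "square set \<Rightarrow> bool" where
  "non_attacking C \<longleftrightarrow> (\<forall>Q\<in>C. \<forall>Q'\<in>C. Q \<noteq> Q' \<longrightarrow> Q' \<notin> attacks Q)"

definition attacking_number :: "square set \<Rightarrow> square \<Rightarrow> nat" where
  "attacking_number C s = card {Q \<in> C. s \<in> attacks Q}"

definition inloss :: "nat \<Rightarrow> square set \<Rightarrow> int" where
  "inloss n C = (\<Sum>s\<in>attacksC C \<inter> B n. int (attacking_number C s) - 1)"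

definition cenloss_queen :: "nat \<Rightarrow> square \<Rightarrow> int" where
  "cenloss_queen n Q = (case Q of (x, y) \<Rightarrow>
     if odd n then 2 * max \<bar>x\<bar> \<bar>y\<bar>
     else 1 + 2 * Min ((\<lambda>(c1, c2). max \<bar>x - c1\<bar> \<bar>y - c2\<bar>) ` {(0,0),(1,0),(0,1),(1,1)}))"

definition cenloss :: "nat \<Rightarrow> square set \<Rightarrow> int" where
  "cenloss n C = (\<Sum>Q\<in>C. cenloss_queen n Q)"

end

theory Submission
  imports Defs
begin
lemma ev: "\<bar>x-y\<bar> + \<bar>x+y-1\<bar> = 1 + 2 * min (min (max \<bar>x\<bar> \<bar>y::int\<bar>) (max \<bar>x-1\<bar> \<bar>y\<bar>)) (min (max \<bar>x\<bar> \<bar>y-1\<bar>) (max \<bar>x-1\<bar> \<bar>y-1\<bar>))"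
  by (simp add: abs_if max_def min_def split: if_splits)
lemma od: "\<bar>x-y\<bar> + \<bar>x+y\<bar> = 2 * max \<bar>x\<bar> \<bar>y::int\<bar>"
  by (simp add: abs_if max_def split: if_splits)
lemma lh: "int n div 2 - (2 - int n) div 2 = int n - 1" "int n div 2 + (2 - int n) div 2 = (if odd n then 0 else 1)"
  by presburger+

lemma card_int_minus0: "l \<le> 0 \<Longrightarrow> 0 \<le> u \<Longrightarrow> int (card ({l..u::int} - {0})) = u - l"
  by simp

lemma queen_count:
  assumes Q: "(x,y) \<in> B n"
  shows "int (card (attacks (x,y) \<inter> B n)) = 4 * int n - 4 - cenloss_queen n (x,y)"
proof -
  define lo where "lo = (2 - int n) div 2"
  define hi where "hi = int n div 2"
  have In: "I n = {lo..hi}" by (simp add: I_def lo_def hi_def)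
  have xy: "lo \<le> x" "x \<le> hi" "lo \<le> y" "y \<le> hi" using Q by (auto simp: B_def In)
  have hl: "hi - lo = int n - 1" "hi + lo = (if odd n then 0 else 1)" using lh[of n] by (simp_all add: lo_def hi_def)
  have n1: "n \<ge> 1" using xy hl by linarith
  define R where "R = (\<lambda>a. (a,y)) ` ({lo..hi} - {x})"
  define Cc where "Cc = (\<lambda>b. (x,b)) ` ({lo..hi} - {y})"
  define D1 where "D1 = (\<lambda>i. (x+i,y+i)) ` ({max (lo-x) (lo-y) .. min (hi-x) (hi-y)} - {0})"
  define D2 where "D2 = (\<lambda>i. (x+i,y-i)) ` ({max (lo-x) (y-hi) .. min (hi-x) (y-lo)} - {0})"
  have eq: "attacks (x,y) \<inter> B n = R \<union> Cc \<union> D1 \<union> D2"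
  proof
    show "attacks (x,y) \<inter> B n \<subseteq> R \<union> Cc \<union> D1 \<union> D2"
      by (auto simp: attacks_def B_def In R_def Cc_def D1_def D2_def)
    show "R \<union> Cc \<union> D1 \<union> D2 \<subseteq> attacks (x,y) \<inter> B n"
    proof -
      have "R \<subseteq> attacks (x,y) \<inter> B n"
      proof
        fix s assume "s \<in> R"
        then obtain a where "s = (a,y)" "a \<in> {lo..hi}" "a \<noteq> x" using \<open>s \<in> R\<close> unfolding R_def by blast
        then show "s \<in> attacks (x,y) \<inter> B n" using xy
          by (auto simp: attacks_def B_def In intro!: exI[of _ "a-x"])
      qed
      moreover have "Cc \<subseteq> attacks (x,y) \<inter> B n"
      proof
        fix s assume "s \<in> Cc"
        then obtain a where "s = (x,a)" "a \<in> {lo..hi}" "a \<noteq> y" using \<open>s \<in> Cc\<close> unfolding Cc_def by blast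
        then show "s \<in> attacks (x,y) \<inter> B n" using xy
          by (auto simp: attacks_def B_def In intro!: exI[of _ "a-y"])
      qed
      moreover have "D1 \<subseteq> attacks (x,y) \<inter> B n"
        by (auto simp: D1_def attacks_def B_def In)
      moreover have "D2 \<subseteq> attacks (x,y) \<inter> B n"
        by (auto simp: D2_def attacks_def B_def In)
      ultimately show ?thesis by blast
    qed
  qed
  have cR: "int (card R) = int n - 1" unfolding R_def
    by (subst card_image) (use n1 in \<open>auto simp: inj_on_def hl xy of_nat_diff\<close>)
  have cC: "int (card Cc) = int n - 1" unfolding Cc_def
    by (subst card_image) (use n1 in \<open>auto simp: inj_on_def hl xy of_nat_diff\<close>)
  have cD1: "int (card D1) = min (hi-x) (hi-y) - max (lo-x) (lo-y)" unfolding D1_def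
    by (subst card_image, simp add: inj_on_def, rule card_int_minus0) (use xy in auto)
  have cD2: "int (card D2) = min (hi-x) (y-lo) - max (lo-x) (y-hi)" unfolding D2_def
    by (subst card_image, simp add: inj_on_def, rule card_int_minus0) (use xy in auto)
  have fin: "finite R" "finite Cc" "finite D1" "finite D2" by (simp_all add: R_def Cc_def D1_def D2_def)
  have d1: "R \<inter> Cc = {}" by (auto simp: R_def Cc_def)
  have d2: "(R \<union> Cc) \<inter> D1 = {}" by (auto simp: R_def Cc_def D1_def)
  have d3: "(R \<union> Cc \<union> D1) \<inter> D2 = {}" by (auto simp: R_def Cc_def D1_def D2_def)
  have "card (R \<union> Cc \<union> D1 \<union> D2) = card R + card Cc + card D1 + card D2"
    using fin d1 d2 d3 by (simp add: card_Un_disjoint)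
  hence tot: "int (card (attacks (x,y) \<inter> B n)) = 2 * int n - 2 + min (hi-x) (hi-y) - max (lo-x) (lo-y)
     + min (hi-x) (y-lo) - max (lo-x) (y-hi)" using eq cR cC cD1 cD2 by simp
  have m1: "min (hi-x) (hi-y) - max (lo-x) (lo-y) = hi - lo - \<bar>x-y\<bar>"
    by (simp add: min_def max_def abs_if)
  have m2: "min (hi-x) (y-lo) - max (lo-x) (y-hi) = hi - lo - \<bar>x+y-(hi+lo)\<bar>"
    by (simp add: min_def max_def abs_if)
  show ?thesis
  proof (cases "odd n")
    case True
    hence "hi + lo = 0" using hl by simp
    moreover have "cenloss_queen n (x,y) = 2 * max \<bar>x\<bar> \<bar>y\<bar>" using True by (simp add: cenloss_queen_def)
    ultimately show ?thesis using tot hl m1 m2 od[of x y] by linarith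
  next
    case False
    hence h1: "hi + lo = 1" using hl by simp
    have c0: "cenloss_queen n (x,y) = 1 + 2 * min (min (max \<bar>x\<bar> \<bar>y\<bar>) (max \<bar>x-1\<bar> \<bar>y\<bar>)) (min (max \<bar>x\<bar> \<bar>y-1\<bar>) (max \<bar>x-1\<bar> \<bar>y-1\<bar>))"
      using False by (simp add: cenloss_queen_def min.assoc)
    have c: "cenloss_queen n (x,y) = \<bar>x-y\<bar> + \<bar>x+y-(hi+lo)\<bar>"
      unfolding h1 c0 by (rule ev[symmetric])
    show ?thesis using tot hl(1) m1 m2 c by linarith
  qed
qed

lemma card_filter_int: "finite A \<Longrightarrow> int (card {x\<in>A. P x}) = (\<Sum>x\<in>A. if P x then 1 else 0)"
  by (simp add: sum.If_cases Int_def conj_commute)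

lemma in_I: "\<bar>a\<bar> \<le> M \<Longrightarrow> 2*M+2 \<le> int n \<Longrightarrow> a \<in> I n"
  unfolding I_def by auto

lemma eventually_sub:
  assumes "finite C"
  shows "\<exists>N::nat. \<forall>n\<ge>N. C \<subseteq> B n"
proof -
  define M where "M = Max (insert 0 ((\<lambda>(a,b). max \<bar>a\<bar> \<bar>b::int\<bar>) ` C))"
  have "\<forall>n\<ge>nat (2*M+2). C \<subseteq> B n"
  proof (intro allI impI subsetI)
    fix n p assume n: "n \<ge> nat (2*M+2)" and p: "p \<in> C"
    obtain a b where ab: "p = (a,b)" by fastforce
    have "max \<bar>a\<bar> \<bar>b\<bar> \<le> M" unfolding M_def using assms p ab
      by (intro Max_ge) force+
    then show "p \<in> B n" using n ab in_I[of a M n] in_I[of b M n] by (auto simp: B_def)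
  qed
  then show ?thesis by blast
qed

lemma formula:
  assumes fin: "finite C" and na: "non_attacking C" and sub: "C \<subseteq> B n"
  shows "int (cover n C) = (4 * int n - 3) * int (card C) - inloss n C - cenloss n C"
proof -
  let ?A = "attacksC C \<inter> B n"
  have finB: "finite (B n)" by (simp add: B_def I_def)
  have finA: "finite ?A" using finB by simp
  have notself: "Q \<notin> attacks Q" for Q by (cases Q) (auto simp: attacks_def)
  have na2: "Q' \<notin> attacks Q" if "Q \<in> C" "Q' \<in> C" for Q Q'
    using na notself[of Q] that unfolding non_attacking_def by (cases "Q = Q'") auto
  have disj: "C \<inter> ?A = {}" using na2 by (auto simp: attacksC_def)
  have "(C \<union> attacksC C) \<inter> B n = C \<union> ?A" using sub by blast
  hence cov: "int (cover n C) = int (card C) + int (card ?A)"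
    unfolding cover_def using disj fin finA by (simp add: card_Un_disjoint)
  have dc: "(\<Sum>s\<in>?A. int (attacking_number C s)) = (\<Sum>Q\<in>C. int (card (attacks Q \<inter> B n)))"
  proof -
    have "(\<Sum>s\<in>?A. int (attacking_number C s)) = (\<Sum>s\<in>?A. \<Sum>Q\<in>C. if s \<in> attacks Q then 1 else 0)"
      unfolding attacking_number_def using fin by (simp add: card_filter_int)
    also have "\<dots> = (\<Sum>Q\<in>C. \<Sum>s\<in>?A. if s \<in> attacks Q then 1 else 0)" by (rule sum.swap)
    also have "\<dots> = (\<Sum>Q\<in>C. int (card {s\<in>?A. s \<in> attacks Q}))"
      by (simp only: card_filter_int[OF finA])
    also have "\<dots> = (\<Sum>Q\<in>C. int (card (attacks Q \<inter> B n)))"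
    proof (rule sum.cong[OF refl])
      fix Q assume "Q \<in> C"
      hence "{s\<in>?A. s \<in> attacks Q} = attacks Q \<inter> B n" by (auto simp: attacksC_def)
      thus "int (card {s\<in>?A. s \<in> attacks Q}) = int (card (attacks Q \<inter> B n))" by simp
    qed
    finally show ?thesis .
  qed
  also have "\<dots> = (\<Sum>Q\<in>C. 4 * int n - 4 - cenloss_queen n Q)"
  proof (rule sum.cong[OF refl])
    fix Q assume "Q \<in> C"
    then show "int (card (attacks Q \<inter> B n)) = 4 * int n - 4 - cenloss_queen n Q"
      using sub queen_count[of "fst Q" "snd Q" n] by auto
  qed
  also have "\<dots> = (4 * int n - 4) * int (card C) - cenloss n C"
    by (simp add: sum_subtractf cenloss_def)
  finally have S: "(\<Sum>s\<in>?A. int (attacking_number C s)) = (4 * int n - 4) * int (card C) - cenloss n C" .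
  have "inloss n C = (\<Sum>s\<in>?A. int (attacking_number C s)) - int (card ?A)"
    unfolding inloss_def by (simp add: sum_subtractf)
  then show ?thesis using cov S by (simp add: algebra_simps)
qed

theorem mainTheorem5:
  fixes C :: "(int \<times> int) set" and q :: nat
  assumes "finite C" and "card C = q" and "non_attacking C"
  shows "\<exists>N::nat. \<forall>n\<ge>N. C \<subseteq> B n \<and>
           int (cover n C) = (4 * int n - 3) * int q - inloss n C - cenloss n C"
proof -
  obtain N where N: "\<forall>n\<ge>N. C \<subseteq> B n" using eventually_sub[OF assms(1)] by blast
  show ?thesis using N formula[OF assms(1) assms(3)] assms(2) by blast
qed
end
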